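(* Let $M\ge 2$ be even, $T\ge1$, $\mathcal{X}=\{\pm1,\pm3,\ldots,\pm(M-1)\}\subset\mathbb{R}$ and $\mathcal{C}=\mathcal{X}^T$. Let $\mathbf{y}\in\mathbb{C}^T$, $\mathbf{y}\neq\mathbf 0$. Let $\mathbf{x}^{\mathrm{opt}}$ be any maximizer of $|\hat{\mathbf{x}}^\dagger\mathbf{y}|^2/\|\hat{\mathbf{x}}\|^2$ over $\hat{\mathbf{x}}\in\mathcal{C}$, let $h^{\mathrm{opt}}=(\mathbf{x}^{\mathrm{opt}})^\dagger\mathbf{y}/\|\mathbf{x}^{\mathrm{opt}}\|^2$ and $\lambda^{\mathrm{opt}}=1/h^{\mathrm{opt}}$. Then $|\mathrm{Re}(\lambda^{\mathrm{opt}}y_t)|\le M+T-2$ for all $t=1,\ldots,T$.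
   Context: $(\cdot)^\dagger$ is the Hermitian transpose and $\|\cdot\|$ the Euclidean norm. This is noncoherent GLRT detection of real $M$-ary PAM codewords of length $T$ transmitted over a complex-valued block fading channel $\mathbf{y}=h\mathbf{x}+\mathbf{n}$; since $\mathbf{y}\neq\mathbf 0$ the maximum is positive so $h^{\mathrm{opt}}\ne0$. *)

theory Defs
  imports "HOL-Analysis.Analysis"
begin

definition pam :: "nat \<Rightarrow> real set" where
  "pam M = {a. \<exists>k::nat. 1 \<le> k \<and> k \<le> M div 2 \<and> (a = 2 * real k - 1 \<or> a = -(2 * real k - 1))}"

text \<open>Codebook X^T: length-T vectors, indices 0..T-1, entries beyond T fixed to 0.\<close>
definition codebook :: "nat \<Rightarrow> nat \<Rightarrow> (nat \<Rightarrow> real) set" where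
  "codebook M T = {x. (\<forall>t<T. x t \<in> pam M) \<and> (\<forall>t\<ge>T. x t = 0)}"

text \<open>Hermitian inner product x^dagger y for real x and complex y.\<close>
definition hinner :: "nat \<Rightarrow> (nat \<Rightarrow> real) \<Rightarrow> (nat \<Rightarrow> complex) \<Rightarrow> complex" where
  "hinner T x y = (\<Sum>t<T. complex_of_real (x t) * y t)"

definition sqnorm :: "nat \<Rightarrow> (nat \<Rightarrow> real) \<Rightarrow> real" where
  "sqnorm T x = (\<Sum>t<T. (x t)\<^sup>2)"

definition glrt_metric :: "nat \<Rightarrow> (nat \<Rightarrow> real) \<Rightarrow> (nat \<Rightarrow> complex) \<Rightarrow> real" where
  "glrt_metric T x y = (cmod (hinner T x y))\<^sup>2 / sqnorm T x"

end

theory Submission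
  imports Defs
begin

lemma pam_bounds:
  assumes "a \<in> pam M" shows "1 \<le> \<bar>a\<bar> \<and> \<bar>a\<bar> \<le> real M - 1"
proof -
  obtain k :: nat where k: "1 \<le> k" "k \<le> M div 2" "a = 2 * real k - 1 \<or> a = -(2 * real k - 1)"
    using assms unfolding pam_def by blast
  have "2 * k \<le> M" using k(2) by linarith
  hence "2 * real k \<le> real M" by linarith
  moreover have "1 \<le> real k" using k(1) by simp
  ultimately show ?thesis using k(3) by auto
qed

lemma pam_up_cases:
  assumes "a \<in> pam M" "even M" "M \<ge> 2"
  shows "a = real M - 1 \<or> a + 2 \<in> pam M"
proof -
  obtain k :: nat where k: "1 \<le> k" "k \<le> M div 2" "a = 2 * real k - 1 \<or> a = -(2 * real k - 1)"
    using assms unfolding pam_def by blast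
  have M2: "2 * (M div 2) = M" using assms(2) by simp
  have M1: "1 \<le> M div 2" using assms(3) by linarith
  show ?thesis
  proof (cases "a = 2 * real k - 1")
    case True
    show ?thesis
    proof (cases "k < M div 2")
      case c: True
      have "a + 2 = 2 * real (k+1) - 1" using True by simp
      thus ?thesis using c unfolding pam_def
        by (intro disjI2 CollectI exI[of _ "k+1"]) auto
    next
      case False
      hence "k = M div 2" using k(2) by simp
      hence "2 * k = M" using M2 by simp
      hence "2 * real k = real M" by (metis of_nat_mult of_nat_numeral)
      thus ?thesis using True by simp
    qed
  next
    case False
    hence a: "a = -(2 * real k - 1)" using k(3) by simp
    show ?thesis
    proof (cases "k = 1")
      case True
      have "a + 2 = 2 * real (1::nat) - 1" using a True by simp
      thus ?thesis using M1 unfolding pam_def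
        by (intro disjI2 CollectI exI[of _ "1::nat"]) auto
    next
      case c: False
      have "a + 2 = -(2 * real (k-1) - 1)" using a c k(1) by (simp add: of_nat_diff)
      thus ?thesis using c k unfolding pam_def
        by (intro disjI2 CollectI exI[of _ "k-1"]) auto
    qed
  qed
qed

lemma pam_neg: "a \<in> pam M \<Longrightarrow> -a \<in> pam M"
  unfolding pam_def by auto

lemma pam_down_cases:
  assumes "a \<in> pam M" "even M" "M \<ge> 2"
  shows "a = -(real M - 1) \<or> a - 2 \<in> pam M"
proof -
  from pam_up_cases[OF pam_neg[OF assms(1)] assms(2,3)]
  have "-a = real M - 1 \<or> -a + 2 \<in> pam M" .
  thus ?thesis
  proof
    assume "-a + 2 \<in> pam M"
    from pam_neg[OF this] show ?thesis by simp
  qed auto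
qed

lemma sum_upd:
  fixes T :: nat
  assumes "s < T"
  shows "(\<Sum>u<T. (x(s := v)) u * r u) = (\<Sum>u<T. x u * r u) + (v - x s) * (r s :: real)"
proof -
  have "(\<Sum>u<T. (x(s := v)) u * r u) = (\<Sum>u<T. x u * r u + (if u = s then (v - x s) * r s else 0))"
    by (rule sum.cong) (auto simp: algebra_simps)
  also have "\<dots> = (\<Sum>u<T. x u * r u) + (v - x s) * r s"
  proof -
    have "(\<Sum>u<T. (if u = s then (v - x s) * r s else 0)) = (v - x s) * r s"
      using assms by (subst sum.delta) (auto simp: finite_lessThan)
    thus ?thesis by (simp add: sum.distrib)
  qed
  finally show ?thesis .
qed

lemma arith_up:
  fixes N r x :: real
  assumes "N > 0" "(N + 2*r)^2 \<le> N*(N + (x+2)^2 - x^2)"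
  shows "r \<le> x + 1"
proof -
  have "4*N*r \<le> 4*N*(x+1) - 4*r^2" using assms(2) by (simp add: power2_eq_square algebra_simps)
  moreover have "0 \<le> r^2" by simp
  ultimately have "N*r \<le> N*(x+1)" by linarith
  thus ?thesis using assms(1) by simp
qed

lemma arith_down:
  fixes N r x :: real
  assumes "N > 0" "(N - 2*r)^2 \<le> N*(N + (x-2)^2 - x^2)"
  shows "x - 1 \<le> r"
proof -
  have "-4*N*r \<le> -4*N*(x-1) - 4*r^2" using assms(2) by (simp add: power2_eq_square algebra_simps)
  moreover have "0 \<le> r^2" by simp
  ultimately have "N*(x-1) \<le> N*r" by linarith
  thus ?thesis using assms(1) by simp
qed

theorem mainTheorem4:
  fixes M T :: nat and y :: "nat \<Rightarrow> complex" and xopt :: "nat \<Rightarrow> real"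
  assumes "M \<ge> 2" and "even M" and "T \<ge> 1"
    and "\<exists>t<T. y t \<noteq> 0"
    and "xopt \<in> codebook M T"
    and "\<forall>x\<in>codebook M T. glrt_metric T x y \<le> glrt_metric T xopt y"
  shows "\<forall>t<T. \<bar>Re ((1 / (hinner T xopt y / complex_of_real (sqnorm T xopt))) * y t)\<bar>
           \<le> real M + real T - 2"
proof (intro allI impI)
  fix t assume tT: "t < T"
  define H where "H = hinner T xopt y"
  define N where "N = sqnorm T xopt"
  have Mr: "real M \<ge> 2" using assms(1) by simp
  have Tr: "real T \<ge> 1" using assms(3) by simp
  have sqpos: "sqnorm T x > 0" if "x \<in> codebook M T" for x
  proof -
    have "(x 0)^2 > 0" using that assms(3) pam_bounds[of "x 0" M] unfolding codebook_def
      by (auto simp: abs_le_iff)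
    moreover have "(x 0)^2 \<le> sqnorm T x" unfolding sqnorm_def
      by (rule member_le_sum) (use assms(3) in auto)
    ultimately show ?thesis by linarith
  qed
  have Npos: "N > 0" unfolding N_def using sqpos assms(5) by blast
  show "\<bar>Re ((1 / (hinner T xopt y / complex_of_real (sqnorm T xopt))) * y t)\<bar> \<le> real M + real T - 2"
  proof (cases "H = 0")
    case True
    thus ?thesis using Mr Tr by (simp add: H_def)
  next
    case Hnz: False
    define lam where "lam = complex_of_real N / H"
    have lam_eq: "1 / (hinner T xopt y / complex_of_real (sqnorm T xopt)) = lam"
      unfolding lam_def H_def N_def by simp
    define r where "r s = Re (lam * y s)" for s
    have Resum: "Re (lam * hinner T x y) = (\<Sum>s<T. x s * r s)" for x
      unfolding hinner_def r_def by (simp add: sum_distrib_left Re_sum algebra_simps)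
    have cmH: "cmod H > 0" using Hnz by simp
    have key: "(\<Sum>s<T. x s * r s)^2 \<le> N * sqnorm T x" if xc: "x \<in> codebook M T" for x
    proof -
      have S: "sqnorm T x > 0" using sqpos xc by blast
      have "cmod (hinner T x y)^2 / sqnorm T x \<le> cmod H^2 / N"
        using assms(6) xc unfolding glrt_metric_def H_def N_def by blast
      hence A: "cmod (hinner T x y)^2 * N \<le> cmod H^2 * sqnorm T x"
        using S Npos by (simp add: field_simps)
      have "cmod (lam * hinner T x y)^2 = N^2 / cmod H^2 * cmod (hinner T x y)^2"
        unfolding lam_def by (simp add: norm_mult norm_divide power_mult_distrib power_divide abs_of_pos Npos)
      also have "\<dots> = N / cmod H^2 * (cmod (hinner T x y)^2 * N)"
        by (simp add: power2_eq_square)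
      also have "\<dots> \<le> N / cmod H^2 * (cmod H^2 * sqnorm T x)"
        by (rule mult_left_mono[OF A]) (use Npos in simp)
      also have "\<dots> = N * sqnorm T x" using cmH by simp
      finally have B: "cmod (lam * hinner T x y)^2 \<le> N * sqnorm T x" .
      have "(Re (lam * hinner T x y))^2 \<le> cmod (lam * hinner T x y)^2"
        using abs_Re_le_cmod by (metis abs_ge_zero power2_abs power_mono)
      thus ?thesis using B Resum[of x] by simp
    qed
    have sumN: "(\<Sum>s<T. xopt s * r s) = N"
    proof -
      have "lam * H = complex_of_real N" unfolding lam_def using Hnz by simp
      thus ?thesis using Resum[of xopt] unfolding H_def by simp
    qed
    have xin: "\<And>s. s < T \<Longrightarrow> xopt s \<in> pam M" using assms(5) unfolding codebook_def by blast
    have upd_cb: "xopt(s := v) \<in> codebook M T" if "s < T" "v \<in> pam M" for s v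
      using assms(5) that unfolding codebook_def by auto
    have sq_upd: "sqnorm T (xopt(s := v)) = N + v^2 - (xopt s)^2" if "s < T" for s v
    proof -
      have "sqnorm T (xopt(s := v)) = (\<Sum>u<T. (xopt(s := v)) u * (xopt(s:=v)) u)"
        unfolding sqnorm_def by (simp add: power2_eq_square)
      also have "\<dots> = (\<Sum>u<T. xopt u * (xopt(s:=v)) u) + (v - xopt s) * v"
        using sum_upd[OF that, of xopt v "xopt(s:=v)"] by simp
      also have "(\<Sum>u<T. xopt u * (xopt(s:=v)) u) = (\<Sum>u<T. (xopt(s:=v)) u * xopt u)"
        by (simp add: mult.commute)
      also have "\<dots> = N + (v - xopt s) * xopt s"
        using sum_upd[OF that, of xopt v xopt] unfolding N_def sqnorm_def by (simp add: power2_eq_square)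
      finally show ?thesis by (simp only: power2_eq_square) (simp add: algebra_simps)
    qed
    have move: "(N + (v - xopt s) * r s)^2 \<le> N * (N + v^2 - (xopt s)^2)" if "s < T" "v \<in> pam M" for s v
      using key[OF upd_cb[OF that]] sum_upd[OF that(1), of xopt v r] sumN sq_upd[OF that(1)] by simp
    have up: "r s \<le> xopt s + 1" if "s < T" "xopt s + 2 \<in> pam M" for s
      using arith_up[OF Npos] move[OF that] by simp
    have down: "xopt s - 1 \<le> r s" if "s < T" "xopt s - 2 \<in> pam M" for s
      using arith_down[OF Npos] move[OF that] by simp
    have each: "xopt s * r s - (xopt s)^2 + \<bar>xopt s\<bar> \<ge> 0" if s: "s < T" for s
    proof -
      have b: "1 \<le> \<bar>xopt s\<bar>" "\<bar>xopt s\<bar> \<le> real M - 1" using pam_bounds[OF xin[OF s]] by auto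
      show ?thesis
      proof (cases "xopt s > 0")
        case True
        hence "xopt s - 2 \<in> pam M" using pam_down_cases[OF xin[OF s] assms(2,1)] Mr by auto
        hence "xopt s - 1 \<le> r s" using down s by blast
        hence "xopt s * (xopt s - 1) \<le> xopt s * r s" using True by (simp add: mult_left_mono)
        thus ?thesis using True by (simp add: power2_eq_square algebra_simps)
      next
        case False
        hence neg: "xopt s < 0" using b by auto
        hence "xopt s + 2 \<in> pam M" using pam_up_cases[OF xin[OF s] assms(2,1)] Mr by auto
        hence "r s \<le> xopt s + 1" using up s by blast
        hence "xopt s * (xopt s + 1) \<le> xopt s * r s" using neg by (simp add: mult_left_mono_neg)
        thus ?thesis using neg by (simp add: power2_eq_square algebra_simps)
      qed
    qed
    have total: "(\<Sum>s<T. xopt s * r s - (xopt s)^2 + \<bar>xopt s\<bar>) = (\<Sum>s<T. \<bar>xopt s\<bar>)"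
      using sumN unfolding N_def sqnorm_def by (simp add: sum.distrib sum_subtractf)
    have absb: "(\<Sum>s<T. \<bar>xopt s\<bar>) \<le> real T * (real M - 1)"
    proof -
      have "(\<Sum>s<T. \<bar>xopt s\<bar>) \<le> (\<Sum>s<T. real M - 1)"
        by (rule sum_mono) (use pam_bounds xin in blast)
      thus ?thesis by simp
    qed
    have tb: "xopt t * r t - (xopt t)^2 + \<bar>xopt t\<bar> \<le> real T * (real M - 1)"
    proof -
      have "xopt t * r t - (xopt t)^2 + \<bar>xopt t\<bar> \<le> (\<Sum>s<T. xopt s * r s - (xopt s)^2 + \<bar>xopt s\<bar>)"
        by (rule member_le_sum) (use each tT in auto)
      thus ?thesis using total absb by linarith
    qed
    have bt: "\<bar>xopt t\<bar> \<le> real M - 1" using pam_bounds[OF xin[OF tT]] by auto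
    have M1: "real M - 1 > 0" using Mr by simp
    have upper: "r t \<le> real M + real T - 2"
    proof -
      from pam_up_cases[OF xin[OF tT] assms(2,1)]
      show ?thesis
      proof
        assume "xopt t + 2 \<in> pam M"
        hence "r t \<le> xopt t + 1" "xopt t + 2 \<le> real M - 1"
          using up tT pam_bounds by (blast, fastforce)
        thus ?thesis using Tr by linarith
      next
        assume e: "xopt t = real M - 1"
        have "(real M - 1) * r t - (real M - 1) * (real M - 1) + (real M - 1) \<le> real T * (real M - 1)"
          using tb e M1 by (simp add: power2_eq_square)
        hence "(real M - 1) * r t \<le> (real M - 1) * (real M + real T - 2)"
          by (simp add: algebra_simps)
        thus ?thesis using M1 by simp
      qed
    qed
    have lower: "-(real M + real T - 2) \<le> r t"
    proof -
      from pam_down_cases[OF xin[OF tT] assms(2,1)]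
      show ?thesis
      proof
        assume "xopt t - 2 \<in> pam M"
        hence "xopt t - 1 \<le> r t" "-(real M - 1) \<le> xopt t - 2"
          using down tT pam_bounds by (blast, fastforce)
        thus ?thesis using Tr by linarith
      next
        assume e: "xopt t = -(real M - 1)"
        have "(real M - 1) * (- r t) - (real M - 1) * (real M - 1) + (real M - 1) \<le> real T * (real M - 1)"
          using tb e M1 by (simp add: power2_eq_square algebra_simps)
        hence "(real M - 1) * (- r t) \<le> (real M - 1) * (real M + real T - 2)"
          by (simp add: algebra_simps)
        hence "- r t \<le> real M + real T - 2" using M1 by (simp only: mult_le_cancel_left_pos)
        thus ?thesis by linarith
      qed
    qed
    show ?thesis unfolding lam_eq using upper lower unfolding r_def by linarith
  qed
qed

end
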